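(* Let $T\ge 1$ and $n_w\ge 0$ be integers, let $C>0$, and let $q_1,\dots,q_T\in\mathbb{R}$. For $\mathbf{u}=(u_1,\dots,u_T)\in\mathbb{R}^T$ and $i=1,\dots,T$ write $\mathbf{u}_i=(u_{i-n_w},\dots,u_i)$, where entries with index $\le 0$ are fixed constants (not decision variables). Let $J_i:\mathbb{R}\to\mathbb{R}$ ($i=1,\dots,T$) be continuously differentiable and increasing, and let $f_i:\mathbb{R}^{n_w+1}\to\mathbb{R}$ ($i=1,\dots,T$) be continuously differentiable and non-decreasing in each of their arguments. Define the penalty function $$\hat J(\mathbf{u})=\sum_{i=1}^T\Big(J_i(u_i)+C\big(f_i(\mathbf{u}_i)-q_i\big)^2\Big),$$ and, for guardrail variables $\epsilon_1,\dots,\epsilon_T\ge 0$, the modified penalty function $$\hat J'(\mathbf{u})=\sum_{i=1}^T\Big(J_i(u_i)+C\big(f_i(\mathbf{u}_i)-q_i-\epsilon_i\big)^2\Big).$$ Let $\mathbf{u}^*$ be any (unconstrained, local) minimum of $\hat J$ on $\mathbb{R}^T$. Then the first step of gradient descent on $\hat J'$ started at $\mathbf{u}^*$ does not decrease any coordinate: for every step size $\alpha>0$ and every $j=1,\dots,T$, the $j$-th coordinate of $\mathbf{u}^*-\alpha\nabla\hat J'(\mathbf{u}^* )$ is at least $u^*_j$ (equivalently, $\nabla \hat J'(\mathbf{u}^* )\le \mathbf{0}$ componentwise).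
   Context: "Increasing" for a differentiable function means its derivative is strictly positive; "non-decreasing" means all its partial derivatives are non-negative. $\hat J'$ is obtained from $\hat J$ by replacing each right-hand side $q_i$ by $q_i+\epsilon_i$. *)

theory Defs
  imports "HOL-Analysis.Analysis"
begin

definition ext_vec :: "(int \<Rightarrow> real) \<Rightarrow> (int \<Rightarrow> real) \<Rightarrow> int \<Rightarrow> real" where
  "ext_vec u0 u k = (if k \<le> 0 then u0 k else u k)"

text \<open>The window vector u_i = (u_{i-nw}, ..., u_i); position p in {0..nw} of the
  coordinate type 'w corresponds to index i - nw + p.\<close>
definition window :: "nat \<Rightarrow> ('w \<Rightarrow> nat) \<Rightarrow> (int \<Rightarrow> real) \<Rightarrow> (int \<Rightarrow> real) \<Rightarrow> int \<Rightarrow> real ^ 'w" where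
  "window nw pos u0 u i = (\<chi> k. ext_vec u0 u (i - int nw + int (pos k)))"

text \<open>Penalty function with right-hand sides q (the modified one uses q + eps).\<close>
definition penalty ::
  "int \<Rightarrow> nat \<Rightarrow> ('w \<Rightarrow> nat) \<Rightarrow> (int \<Rightarrow> real) \<Rightarrow> real \<Rightarrow> (int \<Rightarrow> real \<Rightarrow> real)
     \<Rightarrow> (int \<Rightarrow> real ^ 'w \<Rightarrow> real) \<Rightarrow> (int \<Rightarrow> real) \<Rightarrow> (int \<Rightarrow> real) \<Rightarrow> real" where
  "penalty T nw pos u0 C J f q u =
     (\<Sum>i = 1..T. J i (u i) + C * (f i (window nw pos u0 u i) - q i)\<^sup>2)"

end

theory Submission
  imports Defs
begin


definition Evec :: "nat \<Rightarrow> ('w \<Rightarrow> nat) \<Rightarrow> int \<Rightarrow> int \<Rightarrow> real ^ 'w" where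
  "Evec nw pos j i = (\<chi> k. if i - int nw + int (pos k) = j then 1 else 0)"

lemma window_upd:
  assumes "j \<ge> 1"
  shows "window nw pos u0 (u(j := x)) i =
    (\<chi> k. if i - int nw + int (pos k) = j then 0 else ext_vec u0 u (i - int nw + int (pos k)))
     + x *\<^sub>R Evec nw pos j i"
  using assms by (auto simp: vec_eq_iff window_def ext_vec_def Evec_def)

lemma window_deriv:
  assumes "j \<ge> 1"
  shows "((\<lambda>x. window nw pos u0 (u(j := x)) i) has_derivative (\<lambda>h. h *\<^sub>R Evec nw pos j i)) (at y)"
  unfolding window_upd[OF assms]
  by (intro derivative_eq_intros) auto

lemma f_comp_deriv:
  assumes "j \<ge> 1" and fd: "(g has_derivative g' (window nw pos u0 (u(j := y)) i)) (at (window nw pos u0 (u(j := y)) i))"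
  shows "((\<lambda>x. g (window nw pos u0 (u(j := x)) i)) has_real_derivative
            g' (window nw pos u0 (u(j := y)) i) (Evec nw pos j i)) (at y)"
proof -
  have lin: "linear (g' (window nw pos u0 (u(j := y)) i))"
    using fd has_derivative_linear by blast
  have "((\<lambda>x. g (window nw pos u0 (u(j := x)) i)) has_derivative
          (\<lambda>h. g' (window nw pos u0 (u(j := y)) i) (h *\<^sub>R Evec nw pos j i))) (at y)"
    using diff_chain_at[OF window_deriv[OF assms(1)] fd] by (simp only: o_def)
  moreover have "(\<lambda>h. g' (window nw pos u0 (u(j := y)) i) (h *\<^sub>R Evec nw pos j i))
      = (\<lambda>h. g' (window nw pos u0 (u(j := y)) i) (Evec nw pos j i) * h)"
    using linear_scale[OF lin] by (auto simp: mult.commute)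
  ultimately show ?thesis by (simp add: has_field_derivative_def)
qed

lemma Evec_nonneg:
  fixes L :: "real ^ 'w \<Rightarrow> real"
  assumes inj: "inj pos" and lin: "linear L" and mono: "\<And>k. L (axis k 1) \<ge> 0"
  shows "L (Evec nw pos j i) \<ge> 0"
proof (cases "\<exists>k. i - int nw + int (pos k) = j")
  case True
  then obtain k where k: "i - int nw + int (pos k) = j" by blast
  have "Evec nw pos j i = axis k 1"
  proof -
    have "\<And>k'. (i - int nw + int (pos k') = j) = (k' = k)"
      using k inj by (auto dest: injD)
    then show ?thesis by (auto simp: Evec_def vec_eq_iff axis_def)
  qed
  then show ?thesis using mono by simp
next
  case False
  then have "Evec nw pos j i = 0" by (auto simp: Evec_def vec_eq_iff)
  then show ?thesis using linear_0[OF lin] by simp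
qed

lemma pen_deriv:
  assumes j: "j \<ge> 1"
    and Jd: "\<And>i. i \<in> {1..T} \<Longrightarrow> J i differentiable at (u j)"
    and f_diff: "\<And>i x. i \<in> {1..T} \<Longrightarrow> (f i has_derivative f' i x) (at x)"
  shows "((\<lambda>x. penalty T nw pos u0 C J f q (u(j := x))) has_real_derivative
     (\<Sum>i = 1..T. (if i = j then deriv (J i) (u j) else 0) +
        C * (2 * (f i (window nw pos u0 u i) - q i) * f' i (window nw pos u0 u i) (Evec nw pos j i)))) (at (u j))"
  unfolding penalty_def
proof (rule DERIV_sum)
  fix i assume i: "i \<in> {1..T}"
  have w: "window nw pos u0 (u(j := u j)) i = window nw pos u0 u i" by simp
  have h1: "((\<lambda>x. J i ((u(j := x)) i)) has_real_derivative (if i = j then deriv (J i) (u j) else 0)) (at (u j))"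
  proof (cases "i = j")
    case True
    then show ?thesis using Jd[OF i] by (simp add: DERIV_deriv_iff_real_differentiable)
  qed simp
  have h2: "((\<lambda>x. f i (window nw pos u0 (u(j := x)) i)) has_real_derivative
        f' i (window nw pos u0 u i) (Evec nw pos j i)) (at (u j))"
    using f_comp_deriv[where g="f i" and g'="f' i" and u=u and y="u j", OF j f_diff[OF i]] by simp
  show "((\<lambda>x. J i ((u(j := x)) i) + C * (f i (window nw pos u0 (u(j := x)) i) - q i)\<^sup>2) has_real_derivative
     (if i = j then deriv (J i) (u j) else 0) +
        C * (2 * (f i (window nw pos u0 u i) - q i) * f' i (window nw pos u0 u i) (Evec nw pos j i))) (at (u j))"
    using h1 h2 w by (auto intro!: derivative_eq_intros)
qed

theorem proposition3:
  fixes T :: int and nw :: nat and C :: real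
    and pos :: "'w::finite \<Rightarrow> nat"
    and u0 q eps ustar :: "int \<Rightarrow> real"
    and J :: "int \<Rightarrow> real \<Rightarrow> real"
    and f :: "int \<Rightarrow> real ^ 'w \<Rightarrow> real"
    and f' :: "int \<Rightarrow> real ^ 'w \<Rightarrow> real ^ 'w \<Rightarrow> real"
  assumes T: "T \<ge> 1"
    and C: "C > 0"
    and pos: "bij_betw pos UNIV {0..nw}"
    and J_C1: "\<And>i. i \<in> {1..T} \<Longrightarrow> J i C1_differentiable_on UNIV"
    and J_incr: "\<And>i x. i \<in> {1..T} \<Longrightarrow> deriv (J i) x > 0"
    and f_diff: "\<And>i x. i \<in> {1..T} \<Longrightarrow> (f i has_derivative f' i x) (at x)"
    and f_cont: "\<And>i k. i \<in> {1..T} \<Longrightarrow> continuous_on UNIV (\<lambda>x. f' i x (axis k 1))"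
    and f_mono: "\<And>i k x. i \<in> {1..T} \<Longrightarrow> f' i x (axis k 1) \<ge> 0"
    and eps: "\<And>i. i \<in> {1..T} \<Longrightarrow> eps i \<ge> 0"
    and locmin: "\<exists>e>0. \<forall>v. (\<forall>k\<in>{1..T}. \<bar>v k - ustar k\<bar> < e) \<longrightarrow>
                   penalty T nw pos u0 C J f q ustar \<le> penalty T nw pos u0 C J f q v"
  shows "\<forall>j\<in>{1..T}. \<exists>D.
           ((\<lambda>x. penalty T nw pos u0 C J f (\<lambda>i. q i + eps i) (ustar(j := x)))
              has_real_derivative D) (at (ustar j))
           \<and> (\<forall>\<alpha>>0. ustar j - \<alpha> * D \<ge> ustar j)"
proof
  fix j assume j: "j \<in> {1..T}"
  have inj: "inj pos" using pos bij_betw_imp_inj_on by blast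
  have Jd: "\<And>i. i \<in> {1..T} \<Longrightarrow> J i differentiable at (ustar j)"
    using J_C1 by (auto simp: C1_differentiable_on_eq)
  define W where "W i = window nw pos u0 ustar i" for i
  define a where "a i = f' i (W i) (Evec nw pos j i)" for i
  have a0: "a i \<ge> 0" if "i \<in> {1..T}" for i
    unfolding a_def
    by (rule Evec_nonneg[OF inj]) (use f_diff[OF that] has_derivative_linear f_mono[OF that] in auto)
  define D where "D = (\<Sum>i = 1..T. (if i = j then deriv (J i) (ustar j) else 0) +
        C * (2 * (f i (W i) - (q i + eps i)) * a i))"
  define D0 where "D0 = (\<Sum>i = 1..T. (if i = j then deriv (J i) (ustar j) else 0) +
        C * (2 * (f i (W i) - q i) * a i))"
  have dD: "((\<lambda>x. penalty T nw pos u0 C J f (\<lambda>i. q i + eps i) (ustar(j := x))) has_real_derivative D) (at (ustar j))"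
    using pen_deriv[of j T J ustar f f' nw pos u0 C "\<lambda>i. q i + eps i"] j Jd f_diff
    unfolding D_def W_def a_def by auto
  have dD0: "((\<lambda>x. penalty T nw pos u0 C J f q (ustar(j := x))) has_real_derivative D0) (at (ustar j))"
    using pen_deriv[of j T J ustar f f' nw pos u0 C q] j Jd f_diff
    unfolding D0_def W_def a_def by auto
  obtain e where e: "e > 0" and em: "\<forall>v. (\<forall>k\<in>{1..T}. \<bar>v k - ustar k\<bar> < e) \<longrightarrow>
                   penalty T nw pos u0 C J f q ustar \<le> penalty T nw pos u0 C J f q v"
    using locmin by blast
  have "\<forall>y. \<bar>ustar j - y\<bar> < e \<longrightarrow> penalty T nw pos u0 C J f q (ustar(j := ustar j)) \<le> penalty T nw pos u0 C J f q (ustar(j := y))"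
  proof (intro allI impI)
    fix y assume "\<bar>ustar j - y\<bar> < e"
    then have "\<forall>k\<in>{1..T}. \<bar>(ustar(j := y)) k - ustar k\<bar> < e" using e by (auto simp: abs_minus_commute)
    then show "penalty T nw pos u0 C J f q (ustar(j := ustar j)) \<le> penalty T nw pos u0 C J f q (ustar(j := y))"
      using em by simp
  qed
  then have D00: "D0 = 0" using DERIV_local_min[OF dD0 e] by blast
  have "D = D0 - (\<Sum>i = 1..T. 2 * C * eps i * a i)"
    unfolding D_def D0_def by (simp add: sum_subtractf[symmetric] algebra_simps)
  moreover have "(\<Sum>i = 1..T. 2 * C * eps i * a i) \<ge> 0"
    using a0 eps C by (intro sum_nonneg) auto
  ultimately have "D \<le> 0" using D00 by simp
  then show "\<exists>D. ((\<lambda>x. penalty T nw pos u0 C J f (\<lambda>i. q i + eps i) (ustar(j := x))) has_real_derivative D) (at (ustar j))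
           \<and> (\<forall>\<alpha>>0. ustar j - \<alpha> * D \<ge> ustar j)"
    using dD by (intro exI[of _ D]) (auto simp: mult_le_0_iff)
qed

end
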